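(* Let $G,H$ be groups, $\tau\in\mathrm{CA}(A^G)$, $\phi\in\mathrm{Hom}(H,G)$, and suppose $\mathcal{T}:=\phi^*\circ\tau$ is non-constant. If $\psi\in\mathrm{Hom}(H,G)$ is such that the difference set $\Delta(\phi,\psi)$ is infinite, then $\mathcal{T}\neq\psi^*\circ\tau$.
   Context: $A$ is a finite set with $|A|\ge 2$. $A^G$ is the set of functions $G\to A$ with shift action $(g\cdot x)(k):=x(g^{-1}k)$. $\mathrm{CA}(A^G)$ is the set of maps $\tau:A^G\to A^G$ for which there exist finite $T\subseteq G$ and $\mu:A^T\to A$ with $\tau(x)(g)=\mu((g^{-1}\cdot x)|_T)$ for all $x,g$. For $\phi\in\mathrm{Hom}(H,G)$, $\phi^*:A^G\to A^H$ is $\phi^*(x):=x\circ\phi$. For $\phi,\psi\in\mathrm{Hom}(H,G)$, $\Delta(\phi,\psi):=\{\psi(h)^{-1}\phi(h):h\in H\}\subseteq G$. *)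

theory Defs
  imports "HOL-Algebra.Group" "HOL-Library.FuncSet"
begin

definition config :: "('g, 'm) monoid_scheme \<Rightarrow> 'a set \<Rightarrow> ('g \<Rightarrow> 'a) set" where
  "config G A = (carrier G \<rightarrow>\<^sub>E A)"

definition shift :: "('g, 'm) monoid_scheme \<Rightarrow> 'g \<Rightarrow> ('g \<Rightarrow> 'a) \<Rightarrow> ('g \<Rightarrow> 'a)" where
  "shift G g x = (\<lambda>k\<in>carrier G. x (inv\<^bsub>G\<^esub> g \<otimes>\<^bsub>G\<^esub> k))"

definition is_CA :: "('g, 'm) monoid_scheme \<Rightarrow> 'a set \<Rightarrow> (('g \<Rightarrow> 'a) \<Rightarrow> ('g \<Rightarrow> 'a)) \<Rightarrow> bool" where
  "is_CA G A \<tau> \<longleftrightarrow> (\<exists>T (\<mu> :: ('g \<Rightarrow> 'a) \<Rightarrow> 'a). finite T \<and> T \<subseteq> carrier G \<and>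
      \<mu> ` (T \<rightarrow>\<^sub>E A) \<subseteq> A \<and>
      (\<forall>x \<in> config G A. \<tau> x = (\<lambda>g\<in>carrier G. \<mu> (restrict (shift G (inv\<^bsub>G\<^esub> g) x) T))))"

definition pullback :: "('h, 'n) monoid_scheme \<Rightarrow> ('h \<Rightarrow> 'g) \<Rightarrow> ('g \<Rightarrow> 'a) \<Rightarrow> ('h \<Rightarrow> 'a)" where
  "pullback H \<phi> x = (\<lambda>h\<in>carrier H. x (\<phi> h))"

definition diff_set :: "('g, 'm) monoid_scheme \<Rightarrow> ('h, 'n) monoid_scheme \<Rightarrow> ('h \<Rightarrow> 'g) \<Rightarrow> ('h \<Rightarrow> 'g) \<Rightarrow> 'g set" where
  "diff_set G H \<phi> \<psi> = {inv\<^bsub>G\<^esub> (\<psi> h) \<otimes>\<^bsub>G\<^esub> \<phi> h | h. h \<in> carrier H}"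

end

theory Submission
  imports Defs
begin

theorem theorem3p9:
  fixes G :: "('g, 'm) monoid_scheme" and H :: "('h, 'n) monoid_scheme"
    and A :: "'a set" and \<tau> :: "('g \<Rightarrow> 'a) \<Rightarrow> ('g \<Rightarrow> 'a)"
    and \<phi> \<psi> :: "'h \<Rightarrow> 'g"
  assumes "group G" and "group H"
    and "finite A" and "card A \<ge> 2"
    and "is_CA G A \<tau>"
    and "\<phi> \<in> hom H G" and "\<psi> \<in> hom H G"
    and "\<exists>x \<in> config G A. \<exists>y \<in> config G A. pullback H \<phi> (\<tau> x) \<noteq> pullback H \<phi> (\<tau> y)"
    and "infinite (diff_set G H \<phi> \<psi>)"
  shows "\<exists>x \<in> config G A. pullback H \<phi> (\<tau> x) \<noteq> pullback H \<psi> (\<tau> x)"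
proof -
  interpret G: group G by fact
  obtain T and \<mu> :: "('g \<Rightarrow> 'a) \<Rightarrow> 'a" where fT: "finite T" and TG: "T \<subseteq> carrier G"
    and muA: "\<mu> ` (T \<rightarrow>\<^sub>E A) \<subseteq> A"
    and tau0: "\<forall>x \<in> config G A. \<tau> x = (\<lambda>g\<in>carrier G. \<mu> (restrict (shift G (inv\<^bsub>G\<^esub> g) x) T))"
    using assms(5) unfolding is_CA_def by (elim exE conjE) (rule that)
  have tau: "\<And>x. x \<in> config G A \<Longrightarrow> \<tau> x = (\<lambda>g\<in>carrier G. \<mu> (restrict (shift G (inv\<^bsub>G\<^esub> g) x) T))"
    using tau0 by blast
  have phiG: "\<And>h. h \<in> carrier H \<Longrightarrow> \<phi> h \<in> carrier G" using assms(6) by (auto simp: hom_def)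
  have psiG: "\<And>h. h \<in> carrier H \<Longrightarrow> \<psi> h \<in> carrier G" using assms(7) by (auto simp: hom_def)
  have tauval: "\<tau> x g = \<mu> (\<lambda>k\<in>T. x (g \<otimes>\<^bsub>G\<^esub> k))" if "x \<in> config G A" "g \<in> carrier G" for x g
  proof -
    have "restrict (shift G (inv\<^bsub>G\<^esub> g) x) T = (\<lambda>k\<in>T. x (g \<otimes>\<^bsub>G\<^esub> k))"
      using that TG by (auto simp: shift_def restrict_def fun_eq_iff)
    then show ?thesis using tau[OF that(1)] that(2) by simp
  qed
  have pat: "(\<lambda>k\<in>T. x (g \<otimes>\<^bsub>G\<^esub> k)) \<in> T \<rightarrow>\<^sub>E A" if "x \<in> config G A" "g \<in> carrier G" for x g
    using that TG by (auto simp: config_def PiE_def Pi_def)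
  obtain x0 y0 where x0: "x0 \<in> config G A" and y0: "y0 \<in> config G A"
    and ne: "pullback H \<phi> (\<tau> x0) \<noteq> pullback H \<phi> (\<tau> y0)" using assms(8) by blast
  obtain h0 where h0: "h0 \<in> carrier H" "\<tau> x0 (\<phi> h0) \<noteq> \<tau> y0 (\<phi> h0)"
  proof -
    from ne obtain h0 where "pullback H \<phi> (\<tau> x0) h0 \<noteq> pullback H \<phi> (\<tau> y0) h0" by blast
    then show ?thesis using that unfolding pullback_def by (auto split: if_splits)
  qed
  define p where "p = (\<lambda>k\<in>T. x0 (\<phi> h0 \<otimes>\<^bsub>G\<^esub> k))"
  define q where "q = (\<lambda>k\<in>T. y0 (\<phi> h0 \<otimes>\<^bsub>G\<^esub> k))"
  have pE: "p \<in> T \<rightarrow>\<^sub>E A" and qE: "q \<in> T \<rightarrow>\<^sub>E A"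
    using pat x0 y0 phiG h0(1) p_def q_def by auto
  have mpq: "\<mu> p \<noteq> \<mu> q" using h0 tauval x0 y0 phiG p_def q_def by auto
  define S where "S = (\<lambda>(k,t). k \<otimes>\<^bsub>G\<^esub> inv\<^bsub>G\<^esub> t) ` (T \<times> T)"
  have "finite S" using fT S_def by simp
  then have "infinite (diff_set G H \<phi> \<psi> - S)" using assms(9) using Diff_infinite_finite by blast
  then obtain d where d: "d \<in> diff_set G H \<phi> \<psi>" "d \<notin> S"
  proof -
    from \<open>infinite (diff_set G H \<phi> \<psi> - S)\<close> have "diff_set G H \<phi> \<psi> - S \<noteq> {}" by (metis finite.emptyI)
    then show ?thesis using that by blast
  qed
  then obtain h where h: "h \<in> carrier H" "d = inv\<^bsub>G\<^esub> (\<psi> h) \<otimes>\<^bsub>G\<^esub> \<phi> h"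
    unfolding diff_set_def by blast
  define a where "a = \<phi> h"
  define b where "b = \<psi> h"
  have aG: "a \<in> carrier G" and bG: "b \<in> carrier G" using h phiG psiG a_def b_def by auto
  have "A \<noteq> {}" using assms(4) by auto
  then obtain a0 where a0: "a0 \<in> A" by blast
  define x where "x = (\<lambda>g\<in>carrier G. if inv\<^bsub>G\<^esub> a \<otimes>\<^bsub>G\<^esub> g \<in> T then p (inv\<^bsub>G\<^esub> a \<otimes>\<^bsub>G\<^esub> g)
     else if inv\<^bsub>G\<^esub> b \<otimes>\<^bsub>G\<^esub> g \<in> T then q (inv\<^bsub>G\<^esub> b \<otimes>\<^bsub>G\<^esub> g) else a0)"
  have xc: "x \<in> config G A"
    using pE qE a0 unfolding x_def config_def by (auto simp: PiE_def Pi_def)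
  have px: "(\<lambda>k\<in>T. x (a \<otimes>\<^bsub>G\<^esub> k)) = p"
  proof
    fix k show "(\<lambda>k\<in>T. x (a \<otimes>\<^bsub>G\<^esub> k)) k = p k"
    proof (cases "k \<in> T")
      case True
      then have kG: "k \<in> carrier G" using TG by auto
      have "inv\<^bsub>G\<^esub> a \<otimes>\<^bsub>G\<^esub> (a \<otimes>\<^bsub>G\<^esub> k) = k" using aG kG
        by (simp add: G.m_assoc[symmetric])
      then show ?thesis using True aG kG by (simp add: x_def)
    next
      case False then show ?thesis using pE by (auto simp: PiE_def extensional_def)
    qed
  qed
  have qx: "(\<lambda>k\<in>T. x (b \<otimes>\<^bsub>G\<^esub> k)) = q"
  proof
    fix k show "(\<lambda>k\<in>T. x (b \<otimes>\<^bsub>G\<^esub> k)) k = q k"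
    proof (cases "k \<in> T")
      case True
      then have kG: "k \<in> carrier G" using TG by auto
      have e1: "inv\<^bsub>G\<^esub> b \<otimes>\<^bsub>G\<^esub> (b \<otimes>\<^bsub>G\<^esub> k) = k" using bG kG
        by (simp add: G.m_assoc[symmetric])
      have e2: "inv\<^bsub>G\<^esub> a \<otimes>\<^bsub>G\<^esub> (b \<otimes>\<^bsub>G\<^esub> k) \<notin> T"
      proof
        assume t: "inv\<^bsub>G\<^esub> a \<otimes>\<^bsub>G\<^esub> (b \<otimes>\<^bsub>G\<^esub> k) \<in> T"
        define t' where "t' = inv\<^bsub>G\<^esub> a \<otimes>\<^bsub>G\<^esub> (b \<otimes>\<^bsub>G\<^esub> k)"
        have t'G: "t' \<in> carrier G" using t TG t'_def by auto
        have "a \<otimes>\<^bsub>G\<^esub> t' = b \<otimes>\<^bsub>G\<^esub> k" using aG bG kG t'_def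
          by (simp add: G.m_assoc[symmetric])
        then have "inv\<^bsub>G\<^esub> b \<otimes>\<^bsub>G\<^esub> a \<otimes>\<^bsub>G\<^esub> t' = k"
          using aG bG kG t'G e1 by (simp only: G.m_assoc G.inv_closed)
        then have "inv\<^bsub>G\<^esub> b \<otimes>\<^bsub>G\<^esub> a = k \<otimes>\<^bsub>G\<^esub> inv\<^bsub>G\<^esub> t'"
          using aG bG kG t'G by (simp add: G.inv_solve_right)
        then have "d \<in> S" using h a_def b_def True t t'_def S_def by auto
        then show False using d by simp
      qed
      show ?thesis using True bG kG e1 e2 by (simp add: x_def)
    next
      case False then show ?thesis using qE by (auto simp: PiE_def extensional_def)
    qed
  qed
  have "pullback H \<phi> (\<tau> x) h = \<mu> p" using h aG px tauval[OF xc aG] a_def by (simp add: pullback_def)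
  moreover have "pullback H \<psi> (\<tau> x) h = \<mu> q" using h bG qx tauval[OF xc bG] b_def by (simp add: pullback_def)
  ultimately have "pullback H \<phi> (\<tau> x) \<noteq> pullback H \<psi> (\<tau> x)" using mpq by metis
  then show ?thesis using xc by blast
qed

end
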